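(* A hypergraph $H$ is acyclic if and only if it is Vorob'ev regular.
   Context: A hypergraph $H=(V,E)$ has a finite vertex set $V$ and a set $E$ of nonempty subsets of $V$. Acyclicity: the reduction $R(H)$ keeps only hyperedges not properly contained in another; $H$ is reduced if $H=R(H)$. For $W\subseteq V$, $H[W]=(W,\{X\cap W:X\in E\}\setminus\{\emptyset\})$. For a reduced $H$ and distinct hyperedges $X,Y$ with $X\cap Y\neq\emptyset$, $X\cap Y$ is an articulation set if $R(H[V\setminus(X\cap Y)])$ has more connected components than $H$. A reduced $H$ is acyclic if for every $W\subseteq V$ such that $R(H[W])$ is connected with more than one hyperedge, $R(H[W])$ has an articulation set; an arbitrary $H$ is acyclic if $R(H)$ is (standard $\alpha$-acyclicity). Vorob'ev regularity: a complex is a hypergraph whose set of hyperedges is closed under taking subsets; the downward closure of $H$ is the complex whose hyperedges are all subsets of hyperedges of $H$. In a complex $\mathcal K$, a hyperedge is maximal if not a proper subset of another hyperedge. For distinct maximal hyperedges $X,Y$, $X$ yields a maximal intersection with $Y$ if there is no maximal hyperedge $Z\notin\{X,Y\}$ with $X\cap Y\subsetneq X\cap Z$. A maximal hyperedge $X$ is extreme if all maximal intersections of $X$ are equal. The proper vertices of an extreme $X$ are those belonging to no other maximal hyperedge; the normal subcomplex corresponding to $X$ consists of all hyperedges of $\mathcal K$ disjoint from the proper vertices of $X$. A normal series is a sequence $\mathcal K=\mathcal K_0\supset\mathcal K_1\supset\cdots\supset\mathcal K_r$ with each $\mathcal K_{\ell+1}$ a normal subcomplex of $\mathcal K_\ell$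 ($0\le\ell<r$) and $\mathcal K_r$ having no extreme hyperedge. $\mathcal K$ is regular if it has a normal series whose last term is the complex without vertices. $H$ is Vorob'ev regular if its downward closure is regular. *)

theory Defs
  imports Main
begin

definition hypergraph :: "'a set \<Rightarrow> 'a set set \<Rightarrow> bool" where
  "hypergraph V E \<longleftrightarrow> finite V \<and> E \<subseteq> Pow V \<and> {} \<notin> E"

definition reduce :: "'a set set \<Rightarrow> 'a set set" where
  "reduce E = {X \<in> E. \<not> (\<exists>Y\<in>E. X \<subset> Y)}"

definition is_reduced :: "'a set set \<Rightarrow> bool" where
  "is_reduced E \<longleftrightarrow> reduce E = E"

text \<open>Edges of the induced hypergraph H[W] (its vertex set is W).\<close>
definition induce :: "'a set \<Rightarrow> 'a set set \<Rightarrow> 'a set set" where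
  "induce W E = {X \<inter> W | X. X \<in> E} - {{}}"

text \<open>Connected components of (V,E): classes of the reflexive-transitive closure of
  "lie in a common hyperedge", restricted to V (isolated vertices are singleton components).\<close>
definition components :: "'a set \<Rightarrow> 'a set set \<Rightarrow> 'a set set" where
  "components V E = V // (({(x, y). \<exists>X\<in>E. x \<in> X \<and> y \<in> X})\<^sup>* \<inter> (V \<times> V))"

definition ncomp :: "'a set \<Rightarrow> 'a set set \<Rightarrow> nat" where
  "ncomp V E = card (components V E)"

definition hg_connected :: "'a set \<Rightarrow> 'a set set \<Rightarrow> bool" where
  "hg_connected V E \<longleftrightarrow> ncomp V E = 1"

definition articulation_set :: "'a set \<Rightarrow> 'a set set \<Rightarrow> 'a set \<Rightarrow> bool" where
  "articulation_set V E S \<longleftrightarrow>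
     (\<exists>X\<in>E. \<exists>Y\<in>E. X \<noteq> Y \<and> X \<inter> Y \<noteq> {} \<and> S = X \<inter> Y) \<and>
     ncomp (V - S) (reduce (induce (V - S) E)) > ncomp V E"

definition acyclic_reduced :: "'a set \<Rightarrow> 'a set set \<Rightarrow> bool" where
  "acyclic_reduced V E \<longleftrightarrow>
     (\<forall>W\<subseteq>V. hg_connected W (reduce (induce W E)) \<and> card (reduce (induce W E)) > 1
        \<longrightarrow> (\<exists>S. articulation_set W (reduce (induce W E)) S))"

definition hg_acyclic :: "'a set \<Rightarrow> 'a set set \<Rightarrow> bool" where
  "hg_acyclic V E \<longleftrightarrow> acyclic_reduced V (reduce E)"

text \<open>A complex is represented by its set of hyperedges (its vertices are those lying in
  some hyperedge); it is closed under taking nonempty subsets.\<close>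
definition is_complex :: "'a set set \<Rightarrow> bool" where
  "is_complex K \<longleftrightarrow> {} \<notin> K \<and> (\<forall>X\<in>K. \<forall>Y. Y \<noteq> {} \<and> Y \<subseteq> X \<longrightarrow> Y \<in> K)"

definition down_closure :: "'a set set \<Rightarrow> 'a set set" where
  "down_closure E = {Y. Y \<noteq> {} \<and> (\<exists>X\<in>E. Y \<subseteq> X)}"

definition maximal_edge :: "'a set set \<Rightarrow> 'a set \<Rightarrow> bool" where
  "maximal_edge K X \<longleftrightarrow> X \<in> K \<and> \<not> (\<exists>Y\<in>K. X \<subset> Y)"

definition max_intersection :: "'a set set \<Rightarrow> 'a set \<Rightarrow> 'a set \<Rightarrow> bool" where
  "max_intersection K X Y \<longleftrightarrow> maximal_edge K X \<and> maximal_edge K Y \<and> X \<noteq> Y \<and>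
     \<not> (\<exists>Z. maximal_edge K Z \<and> Z \<noteq> X \<and> Z \<noteq> Y \<and> X \<inter> Y \<subset> X \<inter> Z)"

definition extreme :: "'a set set \<Rightarrow> 'a set \<Rightarrow> bool" where
  "extreme K X \<longleftrightarrow> maximal_edge K X \<and>
     (\<forall>Y Y'. max_intersection K X Y \<and> max_intersection K X Y' \<longrightarrow> X \<inter> Y = X \<inter> Y')"

definition proper_vertices :: "'a set set \<Rightarrow> 'a set \<Rightarrow> 'a set" where
  "proper_vertices K X = {v \<in> X. \<not> (\<exists>Y. maximal_edge K Y \<and> Y \<noteq> X \<and> v \<in> Y)}"

definition normal_subcomplex :: "'a set set \<Rightarrow> 'a set \<Rightarrow> 'a set set" where
  "normal_subcomplex K X = {Y \<in> K. Y \<inter> proper_vertices K X = {}}"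

definition normal_series :: "'a set set \<Rightarrow> (nat \<Rightarrow> 'a set set) \<Rightarrow> nat \<Rightarrow> bool" where
  "normal_series K Ks r \<longleftrightarrow> Ks 0 = K \<and>
     (\<forall>l<r. Ks (Suc l) \<subset> Ks l \<and>
        (\<exists>X. extreme (Ks l) X \<and> Ks (Suc l) = normal_subcomplex (Ks l) X)) \<and>
     \<not> (\<exists>X. extreme (Ks r) X)"

definition regular :: "'a set set \<Rightarrow> bool" where
  "regular K \<longleftrightarrow> (\<exists>Ks r. normal_series K Ks r \<and> Ks r = {})"

definition vorobev_regular :: "'a set \<Rightarrow> 'a set set \<Rightarrow> bool" where
  "vorobev_regular V E \<longleftrightarrow> regular (down_closure E)"

end

theory Submission
  imports Defs
begin


abbreviation crel :: "'a set set \<Rightarrow> ('a \<times> 'a) set" where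
  "crel G \<equiv> {(x, y). \<exists>X\<in>G. x \<in> X \<and> y \<in> X}"

definition ear :: "'a set set \<Rightarrow> 'a set \<Rightarrow> bool" where
  "ear F A \<longleftrightarrow> A \<in> F \<and> (F = {A} \<or> (\<exists>C\<in>F. C \<noteq> A \<and> (\<forall>B\<in>F. B \<noteq> A \<longrightarrow> A \<inter> B \<subseteq> C)))"

definition twoear :: "'a set set \<Rightarrow> bool" where
  "twoear F \<longleftrightarrow> (2 \<le> card F \<longrightarrow> (\<forall>Z\<in>F. \<exists>A. ear F A \<and> A \<noteq> Z))"

definition GG :: "'a set set \<Rightarrow> bool" where
  "GG E \<longleftrightarrow> (\<forall>W. twoear (reduce (induce W E)))"

lemma reduce_subset: "reduce P \<subseteq> P" by (auto simp: reduce_def)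

lemma reduce_above:
  assumes "finite Q" "q \<in> Q" shows "\<exists>M\<in>reduce Q. q \<subseteq> M"
proof -
  let ?A = "{p\<in>Q. q \<subseteq> p}"
  have "finite ?A" using assms(1) by simp
  moreover have "?A \<noteq> {}" using assms(2) by blast
  ultimately obtain m where m1: "m \<in> ?A" and m2: "\<forall>b\<in>?A. m \<le> b \<longrightarrow> m = b"
    using finite_has_maximal[of ?A] by blast
  have "\<not> (\<exists>Y\<in>Q. m \<subset> Y)"
  proof
    assume "\<exists>Y\<in>Q. m \<subset> Y"
    then obtain Y where "Y \<in> Q" "m \<subset> Y" by blast
    moreover have "q \<subseteq> m" using m1 by simp
    ultimately have "Y \<in> ?A" "m \<le> Y" "m \<noteq> Y" by auto
    then show False using m2 by blast
  qed
  then have "m \<in> reduce Q" using m1 unfolding reduce_def by simp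
  then show ?thesis using m1 by blast
qed

lemma reduce_eq:
  assumes "P \<subseteq> Q" "\<forall>q\<in>Q. \<exists>p\<in>P. q \<subseteq> p" shows "reduce P = reduce Q"
proof (rule equalityI)
  show "reduce P \<subseteq> reduce Q"
  proof
    fix x assume "x \<in> reduce P"
    then have x: "x \<in> P" "\<forall>Y\<in>P. \<not> x \<subset> Y" unfolding reduce_def by auto
    have "\<forall>Y\<in>Q. \<not> x \<subset> Y"
    proof
      fix Y assume "Y \<in> Q"
      then obtain p where "p \<in> P" "Y \<subseteq> p" using assms by blast
      then show "\<not> x \<subset> Y" using x by blast
    qed
    then show "x \<in> reduce Q" using x assms(1) unfolding reduce_def by auto
  qed
next
  show "reduce Q \<subseteq> reduce P"
  proof
    fix x assume "x \<in> reduce Q"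
    then have x: "x \<in> Q" "\<forall>Y\<in>Q. \<not> x \<subset> Y" unfolding reduce_def by auto
    obtain p where p: "p \<in> P" "x \<subseteq> p" using assms x by blast
    then have "x = p" using x assms(1) by blast
    then show "x \<in> reduce P" using x p assms(1) unfolding reduce_def by auto
  qed
qed

lemma reduce_idem: "finite P \<Longrightarrow> reduce (reduce P) = reduce P"
  using reduce_eq[of "reduce P" P] reduce_subset reduce_above by blast

lemma finite_induce: "finite E \<Longrightarrow> finite (induce W E)"
proof -
  assume "finite E"
  moreover have "induce W E \<subseteq> (\<lambda>X. X \<inter> W) ` E" unfolding induce_def by auto
  ultimately show ?thesis using finite_surj by blast
qed

lemma induce_sub:
  assumes "finite E" "W' \<subseteq> W"
  shows "reduce (induce W' (reduce (induce W E))) = reduce (induce W' E)"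
proof (rule reduce_eq)
  show "induce W' (reduce (induce W E)) \<subseteq> induce W' E"
  proof
    fix x assume "x \<in> induce W' (reduce (induce W E))"
    then obtain M where M: "M \<in> reduce (induce W E)" "x = M \<inter> W'" "x \<noteq> {}"
      unfolding induce_def by auto
    then have "M \<in> induce W E" using reduce_subset by blast
    then obtain X where X: "X \<in> E" "M = X \<inter> W" unfolding induce_def by auto
    have "x = X \<inter> W'" using M X assms(2) by blast
    then show "x \<in> induce W' E" using X M unfolding induce_def by blast
  qed
  show "\<forall>q\<in>induce W' E. \<exists>p\<in>induce W' (reduce (induce W E)). q \<subseteq> p"
  proof
    fix q assume "q \<in> induce W' E"
    then obtain X where X: "X \<in> E" "q = X \<inter> W'" "q \<noteq> {}" unfolding induce_def by auto
    have "X \<inter> W \<in> induce W E" using X assms(2) unfolding induce_def by auto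
    then obtain M where M: "M \<in> reduce (induce W E)" "X \<inter> W \<subseteq> M"
      using reduce_above[OF finite_induce[OF assms(1)]] by blast
    have q: "q \<subseteq> M \<inter> W'" using X M assms(2) by blast
    then have "M \<inter> W' \<noteq> {}" using X by blast
    then have "M \<inter> W' \<in> induce W' (reduce (induce W E))" using M(1) unfolding induce_def by blast
    moreover note q
    ultimately show "\<exists>p\<in>induce W' (reduce (induce W E)). q \<subseteq> p" by blast
  qed
qed

lemma induce_self: "\<forall>M\<in>F. M \<subseteq> W \<Longrightarrow> {} \<notin> F \<Longrightarrow> induce W F = F"
proof -
  assume a: "\<forall>M\<in>F. M \<subseteq> W" "{} \<notin> F"
  have "{X \<inter> W | X. X \<in> F} = F"
  proof (rule equalityI)
    show "{X \<inter> W | X. X \<in> F} \<subseteq> F" using a(1) by (smt (verit) Int_absorb2 mem_Collect_eq subsetI)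
    show "F \<subseteq> {X \<inter> W | X. X \<in> F}" using a(1) by (smt (verit) Int_absorb2 mem_Collect_eq subsetI)
  qed
  then show ?thesis unfolding induce_def using a(2) by simp
qed

lemma crel_sym: "(x, y) \<in> (crel G)\<^sup>* \<Longrightarrow> (y, x) \<in> (crel G)\<^sup>*"
proof -
  have "sym (crel G)" unfolding sym_def by auto
  then have "sym ((crel G)\<^sup>*)" by (rule sym_rtrancl)
  then show "(x, y) \<in> (crel G)\<^sup>* \<Longrightarrow> (y, x) \<in> (crel G)\<^sup>*" by (meson symD)
qed

lemma comp_one:
  assumes "z \<in> U" "\<forall>d\<in>U. (z, d) \<in> (crel G)\<^sup>*" shows "ncomp U G = 1"
proof -
  let ?R = "(crel G)\<^sup>* \<inter> (U \<times> U)"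
  have "\<And>x. x \<in> U \<Longrightarrow> ?R `` {x} = U"
  proof -
    fix x assume x: "x \<in> U"
    have "(z, x) \<in> (crel G)\<^sup>*" using assms(2) x by blast
    then have "(x, z) \<in> (crel G)\<^sup>*" by (rule crel_sym)
    then have "\<And>y. y \<in> U \<Longrightarrow> (x, y) \<in> (crel G)\<^sup>*" using assms by (meson rtrancl_trans)
    then show "?R `` {x} = U" using x by auto
  qed
  then have "components U G = {U}" unfolding components_def quotient_def using assms(1) by auto
  then show ?thesis unfolding ncomp_def by simp
qed

lemma comp_two:
  assumes "finite U" "t \<in> U" "u \<in> U" "(t, u) \<notin> (crel G)\<^sup>*" shows "2 \<le> ncomp U G"
proof -
  let ?R = "(crel G)\<^sup>* \<inter> (U \<times> U)"
  have a: "?R `` {t} \<in> components U G" "?R `` {u} \<in> components U G"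
    unfolding components_def by (rule quotientI, rule assms(2)) (rule quotientI, rule assms(3))
  have "t \<in> ?R `` {t}" using assms by auto
  moreover have "t \<notin> ?R `` {u}"
  proof
    assume "t \<in> ?R `` {u}"
    then have "(u, t) \<in> (crel G)\<^sup>*" by blast
    then have "(t, u) \<in> (crel G)\<^sup>*" by (rule crel_sym)
    then show False using assms(4) by blast
  qed
  ultimately have ne: "?R `` {t} \<noteq> ?R `` {u}" by blast
  have "finite (components U G)" unfolding components_def using assms(1) finite_quotient by blast
  then have "card {?R `` {t}, ?R `` {u}} \<le> card (components U G)" by (intro card_mono) (use a in auto)
  then show ?thesis unfolding ncomp_def using ne by simp
qed

lemma closed_rtrancl:
  assumes "(t, u) \<in> (crel G)\<^sup>*" "t \<in> T" "\<forall>M\<in>G. M \<subseteq> T \<or> M \<inter> T = {}" shows "u \<in> T"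
  using assms(1,2)
proof (induction rule: rtrancl_induct)
  case base then show ?case by simp
next
  case (step y z) then show ?case using assms(3) by blast
qed

lemma comp_closed:
  assumes "M \<in> G" "\<forall>M\<in>G. M \<subseteq> U" "M \<inter> {v\<in>U. (d, v) \<in> (crel G)\<^sup>*} \<noteq> {}"
  shows "M \<subseteq> {v\<in>U. (d, v) \<in> (crel G)\<^sup>*}"
proof
  fix y assume y: "y \<in> M"
  obtain x where x: "x \<in> M" "(d, x) \<in> (crel G)\<^sup>*" using assms(3) by blast
  have "(x, y) \<in> crel G" using x y assms(1) by blast
  then have "(d, y) \<in> (crel G)\<^sup>*" using x by (meson rtrancl.rtrancl_into_rtrancl)
  then show "y \<in> {v\<in>U. (d, v) \<in> (crel G)\<^sup>*}" using y assms by blast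
qed



lemma nsub_red: "reduce F = F \<Longrightarrow> X \<in> F \<Longrightarrow> Y \<in> F \<Longrightarrow> X \<subseteq> Y \<Longrightarrow> X = Y"
proof -
  assume red: "reduce F = F" and XY: "X \<in> F" "Y \<in> F" "X \<subseteq> Y"
  then have "X \<in> reduce F" by simp
  then have "\<not> X \<subset> Y" using XY(2) unfolding reduce_def by blast
  then show "X = Y" using XY(3) by blast
qed

lemma ear_artic:
  assumes fW: "finite W" and FW: "\<forall>M\<in>F. M \<subseteq> W" and ne: "{} \<notin> F" and red: "reduce F = F"
    and con: "hg_connected W F" and c2: "1 < card F" and ea: "ear F A"
  shows "\<exists>S. articulation_set W F S"
proof -
  have AF: "A \<in> F" using ea unfolding ear_def by simp
  have "F \<noteq> {A}" using c2 by auto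
  then obtain C where C: "C \<in> F" "C \<noteq> A" "\<forall>B\<in>F. B \<noteq> A \<longrightarrow> A \<inter> B \<subseteq> C"
    using ea unfolding ear_def by blast
  have "\<not> A \<subseteq> C" using nsub_red[OF red AF C(1)] C(2) by blast
  then obtain t where t: "t \<in> A" "t \<notin> C" by blast
  have "\<not> C \<subseteq> A" using nsub_red[OF red C(1) AF] C(2) by blast
  then obtain u where u: "u \<in> C" "u \<notin> A" by blast
  have tW: "t \<in> W" "u \<in> W" using t u FW AF C(1) by blast+
  have one: "ncomp W F = 1" using con unfolding hg_connected_def .
  have Sne: "A \<inter> C \<noteq> {}"
  proof
    assume e: "A \<inter> C = {}"
    have cl: "\<forall>M\<in>F. M \<subseteq> A \<or> M \<inter> A = {}"
    proof
      fix M assume M: "M \<in> F"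
      show "M \<subseteq> A \<or> M \<inter> A = {}"
      proof (cases "M = A")
        case True then show ?thesis by simp
      next
        case False then have "A \<inter> M \<subseteq> C" using C(3) M by blast
        then show ?thesis using e by blast
      qed
    qed
    have "(t, u) \<notin> (crel F)\<^sup>*"
    proof
      assume "(t, u) \<in> (crel F)\<^sup>*"
      then have "u \<in> A" using t(1) cl by (rule closed_rtrancl)
      then show False using u by simp
    qed
    then have "2 \<le> ncomp W F" using fW tW by (intro comp_two)
    then show False using one by simp
  qed
  define S where "S = A \<inter> C"
  define G where "G = reduce (induce (W - S) F)"
  have cl: "\<forall>M\<in>G. M \<subseteq> A - S \<or> M \<inter> (A - S) = {}"
  proof
    fix M assume "M \<in> G"
    then have "M \<in> induce (W - S) F" unfolding G_def using reduce_subset by blast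
    then obtain B where B: "B \<in> F" "M = B \<inter> (W - S)" unfolding induce_def by blast
    show "M \<subseteq> A - S \<or> M \<inter> (A - S) = {}"
    proof (cases "B = A")
      case True then show ?thesis using B by blast
    next
      case False then have "A \<inter> B \<subseteq> C" using C(3) B(1) by blast
      then show ?thesis using B S_def by blast
    qed
  qed
  have t2: "t \<in> W - S" "u \<in> W - S" using tW t u S_def by auto
  have tA: "t \<in> A - S" using t S_def by auto
  have "(t, u) \<notin> (crel G)\<^sup>*"
  proof
    assume "(t, u) \<in> (crel G)\<^sup>*"
    then have "u \<in> A - S" using tA cl by (rule closed_rtrancl)
    then show False using u by simp
  qed
  then have "2 \<le> ncomp (W - S) G" using fW t2 by (intro comp_two) auto
  then have "ncomp (W - S) G > ncomp W F" using one by simp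
  then have "articulation_set W F S" unfolding articulation_set_def G_def S_def
    using AF C(1,2) Sne by blast
  then show ?thesis by blast
qed



lemma ear_transfer:
  assumes fF: "finite F" and ne: "{} \<notin> F" and red: "reduce F = F"
   and Z0: "Z0 \<in> F"
   and Sx: "S = {} \<or> (\<exists>X\<in>F. \<exists>Y\<in>F. X \<noteq> Y \<and> S = X \<inter> Y)"
   and Dne: "D \<noteq> {}" and DS: "D \<inter> S = {}" and DU: "D \<subseteq> \<Union>F"
   and P2: "\<forall>Z\<in>F. Z - S \<subseteq> D \<or> (Z - S) \<inter> D = {}"
   and P3: "(Z0 - S) \<inter> D = {}"
   and IH: "twoear (reduce (induce (D \<union> S) F))"
  shows "\<exists>A. ear F A \<and> A \<noteq> Z0"
proof -
  have nsubS: "Z - S \<noteq> {}" if "Z \<in> F" for Z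
  proof
    assume Z: "Z - S = {}"
    show False
    proof (cases "S = {}")
      case True then show False using Z ne that by simp
    next
      case False
      then obtain X Y where XY: "X \<in> F" "Y \<in> F" "X \<noteq> Y" "S = X \<inter> Y" using Sx by blast
      have "Z \<subseteq> X" using Z XY(4) by blast
      then have "Z = X" using nsub_red[OF red that XY(1)] by simp
      then have "X \<subseteq> Y" using Z XY(4) by blast
      then show False using nsub_red[OF red XY(1,2)] XY(3) by simp
    qed
  qed
  define FD where "FD = reduce (induce (D \<union> S) F)"
  define ZD where "ZD = {Z\<in>F. Z - S \<subseteq> D}"
  have ZDF: "ZD \<subseteq> F" unfolding ZD_def by blast
  have finI: "finite (induce (D \<union> S) F)" using fF by (rule finite_induce)
  have finFD: "finite FD" unfolding FD_def using finI reduce_subset finite_subset by blast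
  have FDI: "FD \<subseteq> induce (D \<union> S) F" unfolding FD_def by (rule reduce_subset)
  have neFD: "{} \<notin> FD" using FDI unfolding induce_def by blast
  have ZD_sub: "ZD \<subseteq> FD"
  proof
    fix Z assume Z: "Z \<in> ZD"
    then have ZF: "Z \<in> F" and ZDS: "Z \<subseteq> D \<union> S" unfolding ZD_def by auto
    have ZI: "Z \<in> induce (D \<union> S) F"
    proof -
      have "Z = Z \<inter> (D \<union> S)" using ZDS by blast
      then show ?thesis unfolding induce_def using ZF ne by blast
    qed
    have "\<not> (\<exists>M\<in>induce (D \<union> S) F. Z \<subset> M)"
    proof
      assume "\<exists>M\<in>induce (D \<union> S) F. Z \<subset> M"
      then obtain M Z' where M: "Z' \<in> F" "M = Z' \<inter> (D \<union> S)" "Z \<subset> M" unfolding induce_def by blast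
      then have "Z \<subseteq> Z'" by blast
      then have "Z = Z'" using nsub_red[OF red ZF M(1)] by simp
      then show False using M by blast
    qed
    then show "Z \<in> FD" unfolding FD_def reduce_def using ZI by blast
  qed
  have FD_sub: "FD \<subseteq> ZD \<union> {S}"
  proof
    fix M assume MFD: "M \<in> FD"
    then have MI: "M \<in> induce (D \<union> S) F" using FDI by blast
    have Mmax: "\<not> (\<exists>M'\<in>induce (D \<union> S) F. M \<subset> M')" using MFD unfolding FD_def reduce_def by blast
    obtain Z where Z: "Z \<in> F" "M = Z \<inter> (D \<union> S)" "M \<noteq> {}" using MI unfolding induce_def by blast
    show "M \<in> ZD \<union> {S}"
    proof (cases "Z \<in> ZD")
      case True
      then have "M = Z" using Z unfolding ZD_def by blast
      then show ?thesis using True by simp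
    next
      case False
      then have "(Z - S) \<inter> D = {}" using P2 Z(1) unfolding ZD_def by blast
      then have MS: "M \<subseteq> S" using Z(2) by blast
      then have "S \<noteq> {}" using Z(3) by blast
      then obtain X Y where XY: "X \<in> F" "Y \<in> F" "X \<noteq> Y" "S = X \<inter> Y" using Sx by blast
      have SX: "S \<subseteq> X \<inter> (D \<union> S)" using XY(4) by blast
      then have "X \<inter> (D \<union> S) \<noteq> {}" using \<open>S \<noteq> {}\<close> by blast
      then have XI: "X \<inter> (D \<union> S) \<in> induce (D \<union> S) F" unfolding induce_def using XY(1) by blast
      have "M \<subseteq> X \<inter> (D \<union> S)" using MS SX by blast
      then have "M = X \<inter> (D \<union> S)" using Mmax XI by blast
      then have "M = S" using MS SX by blast
      then show ?thesis by simp
    qed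
  qed
  have ZDne: "ZD \<noteq> {}"
  proof -
    obtain d where d: "d \<in> D" using Dne by blast
    then obtain Z where Z: "Z \<in> F" "d \<in> Z" using DU by blast
    have "d \<in> (Z - S) \<inter> D" using d Z DS by blast
    then have "Z - S \<subseteq> D" using P2 Z(1) by blast
    then show ?thesis unfolding ZD_def using Z(1) by blast
  qed
  have Z1ex: "\<exists>Z1\<in>FD. S \<subseteq> Z1"
  proof (cases "S = {}")
    case True then show ?thesis using ZDne ZD_sub by blast
  next
    case False
    then obtain X Y where XY: "X \<in> F" "Y \<in> F" "X \<noteq> Y" "S = X \<inter> Y" using Sx by blast
    have SX: "S \<subseteq> X \<inter> (D \<union> S)" using XY(4) by blast
    then have "X \<inter> (D \<union> S) \<noteq> {}" using False by blast
    then have XI: "X \<inter> (D \<union> S) \<in> induce (D \<union> S) F" unfolding induce_def using XY(1) by blast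
    obtain M where "M \<in> reduce (induce (D \<union> S) F)" "X \<inter> (D \<union> S) \<subseteq> M"
      using reduce_above[OF finI XI] by blast
    then show ?thesis unfolding FD_def using SX by blast
  qed
  then obtain Z1 where Z1: "Z1 \<in> FD" "S \<subseteq> Z1" by blast
  have notZ0: "A \<noteq> Z0" if "A \<in> ZD" for A
  proof
    assume "A = Z0"
    then have "Z0 - S \<subseteq> D" using that unfolding ZD_def by blast
    then have "Z0 - S = {}" using P3 by blast
    then show False using nsubS[OF Z0] by simp
  qed
  have outside: "A \<inter> B \<subseteq> S" if "A \<in> ZD" "B \<in> F" "B \<notin> ZD" for A B
  proof -
    have "A \<subseteq> D \<union> S" using that(1) unfolding ZD_def by blast
    moreover have "(B - S) \<inter> D = {}" using P2 that(2,3) unfolding ZD_def by blast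
    ultimately show ?thesis by blast
  qed
  have wit: "\<exists>C'\<in>F. C' \<noteq> A \<and> S \<subseteq> C'" if "A \<in> ZD" for A
  proof (cases "S = {}")
    case True then show ?thesis using Z0 notZ0[OF that] by blast
  next
    case False
    then obtain X Y where XY: "X \<in> F" "Y \<in> F" "X \<noteq> Y" "S = X \<inter> Y" using Sx by blast
    show ?thesis
    proof (cases "X = A")
      case True then show ?thesis using XY by blast
    next
      case False then show ?thesis using XY by blast
    qed
  qed
  show ?thesis
  proof (cases "2 \<le> card FD")
    case True
    have "\<exists>A. ear FD A \<and> A \<noteq> Z1" using IH True Z1(1) unfolding twoear_def FD_def[symmetric] by blast
    then obtain A where A: "ear FD A" "A \<noteq> Z1" by blast
    have AFD: "A \<in> FD" using A(1) unfolding ear_def by simp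
    have "A \<noteq> S"
    proof
      assume AS: "A = S"
      have "S \<in> reduce (induce (D \<union> S) F)" using AFD AS FD_def by simp
      then have "\<not> S \<subset> Z1" using Z1(1) FDI unfolding reduce_def by blast
      then show False using Z1(2) A(2) AS by blast
    qed
    then have AZD: "A \<in> ZD" using AFD FD_sub by blast
    then have AF: "A \<in> F" using ZDF by blast
    have "FD \<noteq> {A}" using True by auto
    then obtain C where C: "C \<in> FD" "C \<noteq> A" "\<forall>B\<in>FD. B \<noteq> A \<longrightarrow> A \<inter> B \<subseteq> C"
      using A(1) unfolding ear_def by blast
    have ASC: "A \<inter> S \<subseteq> C" using C(3) Z1 A(2) by blast
    have "ear F A"
    proof (cases "C = S")
      case False
      then have CF: "C \<in> F" using C(1) FD_sub ZDF by blast
      have "\<forall>B\<in>F. B \<noteq> A \<longrightarrow> A \<inter> B \<subseteq> C"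
      proof (intro ballI impI)
        fix B assume B: "B \<in> F" "B \<noteq> A"
        show "A \<inter> B \<subseteq> C"
        proof (cases "B \<in> ZD")
          case True then show ?thesis using C(3) ZD_sub B(2) by blast
        next
          case False then show ?thesis using outside[OF AZD B(1) False] ASC by blast
        qed
      qed
      then show ?thesis unfolding ear_def using AF CF C(2) by blast
    next
      case True
      obtain C' where C': "C' \<in> F" "C' \<noteq> A" "S \<subseteq> C'" using wit[OF AZD] by blast
      have "\<forall>B\<in>F. B \<noteq> A \<longrightarrow> A \<inter> B \<subseteq> C'"
      proof (intro ballI impI)
        fix B assume B: "B \<in> F" "B \<noteq> A"
        show "A \<inter> B \<subseteq> C'"
        proof (cases "B \<in> ZD")
          case True then show ?thesis using C(3) ZD_sub B(2) \<open>C = S\<close> C'(3) by blast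
        next
          case False then show ?thesis using outside[OF AZD B(1) False] C'(3) by blast
        qed
      qed
      then show ?thesis unfolding ear_def using AF C' by blast
    qed
    then show ?thesis using notZ0[OF AZD] by blast
  next
    case False
    have "FD \<noteq> {}" using Z1 by blast
    then have "card FD \<noteq> 0" using finFD by simp
    then have "card FD = 1" using False by simp
    then obtain A where FDA: "FD = {A}" using card_1_singleton_iff by (metis One_nat_def)
    have ZDA: "ZD = {A}" using ZDne ZD_sub FDA by blast
    then have AZD: "A \<in> ZD" by simp
    then have AF: "A \<in> F" using ZDF by blast
    obtain C' where C': "C' \<in> F" "C' \<noteq> A" "S \<subseteq> C'" using wit[OF AZD] by blast
    have "\<forall>B\<in>F. B \<noteq> A \<longrightarrow> A \<inter> B \<subseteq> C'"
    proof (intro ballI impI)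
      fix B assume B: "B \<in> F" "B \<noteq> A"
      then have "B \<notin> ZD" using ZDA by simp
      then show "A \<inter> B \<subseteq> C'" using outside[OF AZD B(1)] C'(3) by blast
    qed
    then have "ear F A" unfolding ear_def using AF C' by blast
    then show ?thesis using notZ0[OF AZD] by blast
  qed
qed



lemma getD:
  assumes fF: "finite F" and FU: "\<forall>Z\<in>F. Z \<subseteq> U" and Z0: "Z0 \<in> F" and z: "z \<in> Z0 - S"
   and nc: "ncomp (U - S) (reduce (induce (U - S) F)) \<noteq> 1"
  shows "\<exists>D. D \<noteq> {} \<and> D \<subseteq> U - S \<and> (\<forall>Z\<in>F. Z - S \<subseteq> D \<or> (Z - S) \<inter> D = {}) \<and> (Z0 - S) \<inter> D = {}"
proof -
  define G where "G = reduce (induce (U - S) F)"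
  have zU: "z \<in> U - S" using z Z0 FU by blast
  have "\<not> (\<forall>d\<in>U - S. (z, d) \<in> (crel G)\<^sup>*)"
  proof
    assume "\<forall>d\<in>U - S. (z, d) \<in> (crel G)\<^sup>*"
    then have "ncomp (U - S) G = 1" using zU by (intro comp_one)
    then show False using nc G_def by simp
  qed
  then obtain d where d: "d \<in> U - S" "(z, d) \<notin> (crel G)\<^sup>*" by blast
  define D where "D = {v\<in>U - S. (d, v) \<in> (crel G)\<^sup>*}"
  have GU: "\<forall>M\<in>G. M \<subseteq> U - S"
  proof
    fix M assume "M \<in> G"
    then have "M \<in> induce (U - S) F" unfolding G_def using reduce_subset by blast
    then show "M \<subseteq> U - S" unfolding induce_def by blast
  qed
  have dD: "d \<in> D" unfolding D_def using d by simp
  have P2: "Z - S \<subseteq> D \<or> (Z - S) \<inter> D = {}" if ZF: "Z \<in> F" for Z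
  proof (cases "(Z - S) \<inter> D = {}")
    case True then show ?thesis by simp
  next
    case False
    have eq: "Z - S = Z \<inter> (U - S)" using ZF FU by blast
    then have "Z \<inter> (U - S) \<in> induce (U - S) F" unfolding induce_def using ZF False by blast
    then obtain M where M: "M \<in> G" "Z \<inter> (U - S) \<subseteq> M"
      using reduce_above[OF finite_induce[OF fF]] unfolding G_def by blast
    then have "M \<inter> D \<noteq> {}" using False eq by blast
    then have "M \<subseteq> D" unfolding D_def using comp_closed[OF M(1) GU] by blast
    then show ?thesis using M(2) eq by blast
  qed
  have P3: "(Z0 - S) \<inter> D = {}"
  proof (rule ccontr)
    assume "(Z0 - S) \<inter> D \<noteq> {}"
    then have "Z0 - S \<subseteq> D" using P2[OF Z0] by blast
    then have "z \<in> D" using z by blast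
    then have "(d, z) \<in> (crel G)\<^sup>*" unfolding D_def by simp
    then have "(z, d) \<in> (crel G)\<^sup>*" by (rule crel_sym)
    then show False using d(2) by simp
  qed
  have "D \<noteq> {}" using dD by blast
  moreover have "D \<subseteq> U - S" unfolding D_def by blast
  moreover have "\<forall>Z\<in>F. Z - S \<subseteq> D \<or> (Z - S) \<inter> D = {}" using P2 by blast
  ultimately show ?thesis using P3 by blast
qed

definition sepok :: "'a set set \<Rightarrow> 'a set \<Rightarrow> bool" where
  "sepok F S \<longleftrightarrow> S = {} \<or> (\<exists>X\<in>F. \<exists>Y\<in>F. X \<noteq> Y \<and> S = X \<inter> Y)"

lemma ear_step:
  assumes fF: "finite F" and ne: "{} \<notin> F" and red: "reduce F = F" and fU: "finite (\<Union>F)"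
   and IH: "\<And>W'. W' \<subset> \<Union>F \<Longrightarrow> twoear (reduce (induce W' F))"
   and ART: "hg_connected (\<Union>F) F \<Longrightarrow> 1 < card F \<Longrightarrow> \<exists>S. articulation_set (\<Union>F) F S"
  shows "twoear F"
  unfolding twoear_def
proof (intro impI ballI)
  fix Z0 assume c2: "2 \<le> card F" and Z0: "Z0 \<in> F"
  define U where "U = \<Union>F"
  have FU: "\<forall>Z\<in>F. Z \<subseteq> U" unfolding U_def by blast
  have "\<exists>S D. sepok F S \<and> D \<noteq> {} \<and> D \<subseteq> U - S \<and>
     (\<forall>Z\<in>F. Z - S \<subseteq> D \<or> (Z - S) \<inter> D = {}) \<and> (Z0 - S) \<inter> D = {} \<and> S \<subseteq> U \<and> Z0 - S \<noteq> {}"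
  proof (cases "hg_connected U F")
    case True
    have "1 < card F" using c2 by simp
    then obtain S where S: "articulation_set U F S" using ART True unfolding U_def by blast
    then obtain X Y where XY: "X \<in> F" "Y \<in> F" "X \<noteq> Y" "S = X \<inter> Y"
      and gt: "ncomp (U - S) (reduce (induce (U - S) F)) > ncomp U F"
      unfolding articulation_set_def by blast
    have nc: "ncomp (U - S) (reduce (induce (U - S) F)) \<noteq> 1" using gt True unfolding hg_connected_def by simp
    have "Z0 - S \<noteq> {}"
    proof
      assume Z: "Z0 - S = {}"
      have "Z0 \<subseteq> X" using Z XY(4) by blast
      then have "Z0 = X" using nsub_red[OF red Z0 XY(1)] by simp
      then have "X \<subseteq> Y" using Z XY(4) by blast
      then show False using nsub_red[OF red XY(1,2)] XY(3) by simp
    qed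
    then obtain z where z: "z \<in> Z0 - S" by blast
    have SU: "S \<subseteq> U" using XY FU by blast
    obtain D where D: "D \<noteq> {}" "D \<subseteq> U - S" "\<forall>Z\<in>F. Z - S \<subseteq> D \<or> (Z - S) \<inter> D = {}" "(Z0 - S) \<inter> D = {}"
      using getD[OF fF FU Z0 z nc] by blast
    have "sepok F S" unfolding sepok_def using XY by blast
    then show ?thesis using D SU \<open>Z0 - S \<noteq> {}\<close> by (intro exI[of _ S] exI[of _ D]) simp
  next
    case False
    have "induce U F = F" using FU ne by (rule induce_self)
    then have "reduce (induce (U - {}) F) = F" using red by simp
    then have nc: "ncomp (U - {}) (reduce (induce (U - {}) F)) \<noteq> 1"
      using False unfolding hg_connected_def by simp
    have "Z0 \<noteq> {}" using Z0 ne by blast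
    then obtain z where z: "z \<in> Z0 - {}" by blast
    obtain D where D: "D \<noteq> {}" "D \<subseteq> U - {}" "\<forall>Z\<in>F. Z - {} \<subseteq> D \<or> (Z - {}) \<inter> D = {}" "(Z0 - {}) \<inter> D = {}"
      using getD[OF fF FU Z0 z nc] by blast
    have "{} \<subseteq> U" "Z0 - {} \<noteq> {}" using \<open>Z0 \<noteq> {}\<close> by auto
    moreover have "sepok F {}" unfolding sepok_def by simp
    ultimately show ?thesis using D by (intro exI[of _ "{}"] exI[of _ D]) simp
  qed
  then obtain S D where Sx: "sepok F S" and Dne: "D \<noteq> {}"
    and DUS: "D \<subseteq> U - S" and P2: "\<forall>Z\<in>F. Z - S \<subseteq> D \<or> (Z - S) \<inter> D = {}"
    and P3: "(Z0 - S) \<inter> D = {}" and SU: "S \<subseteq> U" and Z0S: "Z0 - S \<noteq> {}" by blast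
  have "D \<union> S \<subset> U"
  proof -
    obtain z where z: "z \<in> Z0 - S" using Z0S by blast
    then have "z \<in> U" "z \<notin> D \<union> S" using P3 FU Z0 by blast+
    then show ?thesis using DUS SU by blast
  qed
  then have IH': "twoear (reduce (induce (D \<union> S) F))" using IH U_def by simp
  have DS: "D \<inter> S = {}" using DUS by blast
  have DU: "D \<subseteq> \<Union>F" using DUS U_def by blast
  show "\<exists>A. ear F A \<and> A \<noteq> Z0"
    using ear_transfer[OF fF ne red Z0 Sx[unfolded sepok_def] Dne DS DU P2 P3 IH'] .

qed

lemma acyc_GG:
  assumes fV: "finite V" and EV: "\<forall>X\<in>E. X \<subseteq> V" and fE: "finite E" and red: "reduce E = E"
    and acyc: "acyclic_reduced V E"
  shows "GG E"
proof -
  have main: "W \<subseteq> V \<Longrightarrow> twoear (reduce (induce W E))" for W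
  proof (induction "card W" arbitrary: W rule: less_induct)
    case less
    define F where "F = reduce (induce W E)"
    have fW: "finite W" using less.prems fV finite_subset by blast
    have fF: "finite F" unfolding F_def using finite_induce[OF fE] reduce_subset finite_subset by blast
    have FI: "F \<subseteq> induce W E" unfolding F_def by (rule reduce_subset)
    have ne: "{} \<notin> F" using FI unfolding induce_def by blast
    have FW: "\<Union>F \<subseteq> W" using FI unfolding induce_def by blast
    have redF: "reduce F = F" unfolding F_def using finite_induce[OF fE] by (rule reduce_idem)
    have fU: "finite (\<Union>F)" using FW fW finite_subset by blast
    have sub: "reduce (induce W' F) = reduce (induce W' E)" if "W' \<subseteq> W" for W'
      unfolding F_def using fE that by (rule induce_sub)
    show ?case unfolding F_def[symmetric]
    proof (rule ear_step[OF fF ne redF fU])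
      fix W' assume W': "W' \<subset> \<Union>F"
      then have "W' \<subset> W" using FW by blast
      then have "card W' < card W" using psubset_card_mono[OF fW] by simp


      moreover have "W' \<subseteq> V" using \<open>W' \<subset> W\<close> less.prems by blast
      ultimately have "twoear (reduce (induce W' E))" using less.hyps by blast
      then show "twoear (reduce (induce W' F))" using sub \<open>W' \<subset> W\<close> by simp
    next
      assume con: "hg_connected (\<Union>F) F" and c1: "1 < card F"
      have UV: "\<Union>F \<subseteq> V" using FW less.prems by blast
      have "induce (\<Union>F) F = F" using ne by (intro induce_self) auto
      then have eqF: "reduce (induce (\<Union>F) E) = F" using sub[OF FW] redF by simp
      have "hg_connected (\<Union>F) (reduce (induce (\<Union>F) E)) \<and> 1 < card (reduce (induce (\<Union>F) E))"
        using con c1 eqF by simp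
      then have "\<exists>S. articulation_set (\<Union>F) (reduce (induce (\<Union>F) E)) S"
        using acyc UV unfolding acyclic_reduced_def by blast
      then show "\<exists>S. articulation_set (\<Union>F) F S" using eqF by simp

    qed
  qed
  show ?thesis unfolding GG_def
  proof
    fix W
    have "induce W E = induce (W \<inter> V) E" unfolding induce_def using EV by blast
    then show "twoear (reduce (induce W E))" using main[of "W \<inter> V"] by simp
  qed
qed

lemma GG_acyc:
  assumes fV: "finite V" and EV: "\<forall>X\<in>E. X \<subseteq> V" and fE: "finite E" and GG: "GG E"
  shows "acyclic_reduced V E"
  unfolding acyclic_reduced_def
proof (intro allI impI)
  fix W assume WV: "W \<subseteq> V" and h: "hg_connected W (reduce (induce W E)) \<and> 1 < card (reduce (induce W E))"
  define F where "F = reduce (induce W E)"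
  have fW: "finite W" using WV fV finite_subset by blast
  have FI: "F \<subseteq> induce W E" unfolding F_def by (rule reduce_subset)
  have ne: "{} \<notin> F" using FI unfolding induce_def by blast
  have FW: "\<forall>M\<in>F. M \<subseteq> W" using FI unfolding induce_def by blast
  have redF: "reduce F = F" unfolding F_def using finite_induce[OF fE] by (rule reduce_idem)
  have c: "2 \<le> card F" "1 < card F" using h F_def by auto
  then have "F \<noteq> {}" by auto
  then obtain Z where Z: "Z \<in> F" by blast
  have "twoear F" using GG unfolding GG_def F_def by blast
  then obtain A where "ear F A" using c Z unfolding twoear_def by blast
  then show "\<exists>S. articulation_set W (reduce (induce W E)) S"
    using ear_artic[OF fW FW ne redF _ c(2)] h F_def by blast
qed



lemma max_dc:
  assumes ne: "{} \<notin> E" and red: "reduce E = E"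
  shows "maximal_edge (down_closure E) X \<longleftrightarrow> X \<in> E"
proof
  assume "maximal_edge (down_closure E) X"
  then have X: "X \<in> down_closure E" "\<not> (\<exists>Y\<in>down_closure E. X \<subset> Y)" unfolding maximal_edge_def by auto
  then obtain Y where Y: "Y \<in> E" "X \<subseteq> Y" unfolding down_closure_def by blast
  have "Y \<in> down_closure E" using Y ne unfolding down_closure_def by blast
  then have "X = Y" using X(2) Y(2) by blast
  then show "X \<in> E" using Y by simp
next
  assume X: "X \<in> E"
  have "X \<noteq> {}" using X ne by blast
  then have "X \<in> down_closure E" using X unfolding down_closure_def by blast
  moreover have "\<not> (\<exists>Y\<in>down_closure E. X \<subset> Y)"
  proof
    assume "\<exists>Y\<in>down_closure E. X \<subset> Y"
    then obtain Y Z where "Z \<in> E" "Y \<subseteq> Z" "X \<subset> Y" unfolding down_closure_def by blast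
    then have "X \<subseteq> Z" "X \<noteq> Z" by auto
    then show False using nsub_red[OF red X \<open>Z \<in> E\<close>] by simp
  qed
  ultimately show "maximal_edge (down_closure E) X" unfolding maximal_edge_def by blast
qed

lemma maxint_dc:
  assumes ne: "{} \<notin> E" and red: "reduce E = E"
  shows "max_intersection (down_closure E) X Y \<longleftrightarrow>
    X \<in> E \<and> Y \<in> E \<and> X \<noteq> Y \<and> \<not> (\<exists>Z\<in>E. Z \<noteq> X \<and> Z \<noteq> Y \<and> X \<inter> Y \<subset> X \<inter> Z)"
  unfolding max_intersection_def max_dc[OF ne red] by blast

lemma exmax:
  assumes fE: "finite E" and ne: "{} \<notin> E" and red: "reduce E = E"
    and X: "X \<in> E" and B: "B \<in> E" "B \<noteq> X"
  shows "\<exists>Y. max_intersection (down_closure E) X Y \<and> X \<inter> B \<subseteq> X \<inter> Y"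
proof -
  define T where "T = {Z\<in>E. Z \<noteq> X \<and> X \<inter> B \<subseteq> X \<inter> Z}"
  have "finite ((\<lambda>Z. X \<inter> Z) ` T)" using fE unfolding T_def by simp
  moreover have "(\<lambda>Z. X \<inter> Z) ` T \<noteq> {}" using B unfolding T_def by blast
  ultimately obtain m where m1: "m \<in> (\<lambda>Z. X \<inter> Z) ` T" and m2: "\<forall>b\<in>(\<lambda>Z. X \<inter> Z) ` T. m \<le> b \<longrightarrow> m = b"
    using finite_has_maximal[of "(\<lambda>Z. X \<inter> Z) ` T"] by blast
  then obtain Y where Y: "Y \<in> T" "m = X \<inter> Y" by blast
  have "\<not> (\<exists>Z\<in>E. Z \<noteq> X \<and> Z \<noteq> Y \<and> X \<inter> Y \<subset> X \<inter> Z)"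
  proof
    assume "\<exists>Z\<in>E. Z \<noteq> X \<and> Z \<noteq> Y \<and> X \<inter> Y \<subset> X \<inter> Z"
    then obtain Z where Z: "Z \<in> E" "Z \<noteq> X" "X \<inter> Y \<subset> X \<inter> Z" by blast
    have "X \<inter> B \<subseteq> X \<inter> Y" using Y(1) unfolding T_def by blast
    then have "Z \<in> T" using Z unfolding T_def by blast
    then have "X \<inter> Z \<in> (\<lambda>Z. X \<inter> Z) ` T" by blast
    then have "m = X \<inter> Z" using m2 Y(2) Z(3) by blast
    then show False using Y(2) Z(3) by blast
  qed
  then have "max_intersection (down_closure E) X Y"
    unfolding maxint_dc[OF ne red] using X Y(1) unfolding T_def by blast
  moreover have "X \<inter> B \<subseteq> X \<inter> Y" using Y(1) unfolding T_def by blast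
  ultimately show ?thesis by blast
qed

lemma ear_extreme:
  assumes fE: "finite E" and ne: "{} \<notin> E" and red: "reduce E = E"
  shows "ear E X \<longleftrightarrow> extreme (down_closure E) X"
proof
  assume ea: "ear E X"
  then have X: "X \<in> E" unfolding ear_def by simp
  have key: "X \<inter> Y = X \<inter> C" if C: "C \<in> E" "C \<noteq> X" "\<forall>B\<in>E. B \<noteq> X \<longrightarrow> X \<inter> B \<subseteq> C"
    and Y: "max_intersection (down_closure E) X Y" for C Y
  proof -
    have Y': "Y \<in> E" "Y \<noteq> X" "\<not> (\<exists>Z\<in>E. Z \<noteq> X \<and> Z \<noteq> Y \<and> X \<inter> Y \<subset> X \<inter> Z)"
      using Y unfolding maxint_dc[OF ne red] by auto
    have "X \<inter> Y \<subseteq> X \<inter> C" using C(3) Y' by blast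
    then show ?thesis using Y'(3) C(1,2) by blast
  qed
  show "extreme (down_closure E) X"
    unfolding extreme_def
  proof (intro conjI allI impI)
    show "maximal_edge (down_closure E) X" using X max_dc[OF ne red] by simp
    fix Y Y' assume YY: "max_intersection (down_closure E) X Y \<and> max_intersection (down_closure E) X Y'"
    then have "Y \<in> E" "Y \<noteq> X" unfolding maxint_dc[OF ne red] by auto
    then have "E \<noteq> {X}" by blast
    then obtain C where C: "C \<in> E" "C \<noteq> X" "\<forall>B\<in>E. B \<noteq> X \<longrightarrow> X \<inter> B \<subseteq> C" using ea unfolding ear_def by blast
    show "X \<inter> Y = X \<inter> Y'" using key[OF C] YY by metis
  qed
next
  assume ex: "extreme (down_closure E) X"
  then have X: "X \<in> E" unfolding extreme_def using max_dc[OF ne red] by simp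
  show "ear E X"
  proof (cases "E = {X}")
    case True then show ?thesis unfolding ear_def by simp
  next
    case False
    then obtain B0 where B0: "B0 \<in> E" "B0 \<noteq> X" using X by blast
    obtain Y0 where Y0: "max_intersection (down_closure E) X Y0" using exmax[OF fE ne red X B0] by blast
    then have Y0': "Y0 \<in> E" "Y0 \<noteq> X" unfolding maxint_dc[OF ne red] by auto
    have "\<forall>B\<in>E. B \<noteq> X \<longrightarrow> X \<inter> B \<subseteq> Y0"
    proof (intro ballI impI)
      fix B assume "B \<in> E" "B \<noteq> X"
      then obtain Y where Y: "max_intersection (down_closure E) X Y" "X \<inter> B \<subseteq> X \<inter> Y"
        using exmax[OF fE ne red X] by blast
      have "X \<inter> Y = X \<inter> Y0" using ex Y(1) Y0 unfolding extreme_def by blast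
      then show "X \<inter> B \<subseteq> Y0" using Y(2) by blast
    qed
    then show ?thesis unfolding ear_def using X Y0' by blast
  qed
qed

lemma normal_dc:
  assumes ne: "{} \<notin> E" and red: "reduce E = E" and ea: "ear E X"
  shows "normal_subcomplex (down_closure E) X = down_closure (E - {X})"
proof -
  have X: "X \<in> E" using ea unfolding ear_def by simp
  have P: "proper_vertices (down_closure E) X = {v\<in>X. \<not> (\<exists>Y\<in>E. Y \<noteq> X \<and> v \<in> Y)}"
    unfolding proper_vertices_def max_dc[OF ne red] by blast
  show ?thesis
  proof (rule equalityI)
    show "normal_subcomplex (down_closure E) X \<subseteq> down_closure (E - {X})"
    proof
      fix Y assume "Y \<in> normal_subcomplex (down_closure E) X"
      then have Y: "Y \<in> down_closure E" "Y \<inter> {v\<in>X. \<not> (\<exists>Y\<in>E. Y \<noteq> X \<and> v \<in> Y)} = {}"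
        unfolding normal_subcomplex_def P by auto
      then obtain Z where Z: "Z \<in> E" "Y \<subseteq> Z" "Y \<noteq> {}" unfolding down_closure_def by blast
      show "Y \<in> down_closure (E - {X})"
      proof (cases "Z = X")
        case False then show ?thesis using Z unfolding down_closure_def by blast
      next
        case True
        show ?thesis
        proof (cases "E = {X}")
          case True
          then have "Y \<inter> X = {}" using Y(2) by blast
          then show ?thesis using Z \<open>Z = X\<close> by blast
        next
          case False
          then obtain C where C: "C \<in> E" "C \<noteq> X" "\<forall>B\<in>E. B \<noteq> X \<longrightarrow> X \<inter> B \<subseteq> C"
            using ea unfolding ear_def by blast
          have "Y \<subseteq> C"
          proof
            fix v assume v: "v \<in> Y"
            then have "v \<in> X" using Z \<open>Z = X\<close> by blast
            then obtain Y' where "Y' \<in> E" "Y' \<noteq> X" "v \<in> Y'" using Y(2) v by blast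
            then show "v \<in> C" using C(3) \<open>v \<in> X\<close> by blast
          qed
          then show ?thesis using C Z(3) unfolding down_closure_def by blast
        qed
      qed
    qed
  next
    show "down_closure (E - {X}) \<subseteq> normal_subcomplex (down_closure E) X"
    proof
      fix Y assume "Y \<in> down_closure (E - {X})"
      then obtain Z where Z: "Z \<in> E" "Z \<noteq> X" "Y \<subseteq> Z" "Y \<noteq> {}" unfolding down_closure_def by blast
      have "Y \<in> down_closure E" using Z unfolding down_closure_def by blast
      moreover have "Y \<inter> {v\<in>X. \<not> (\<exists>Y\<in>E. Y \<noteq> X \<and> v \<in> Y)} = {}" using Z by blast
      ultimately show "Y \<in> normal_subcomplex (down_closure E) X" unfolding normal_subcomplex_def P by blast
    qed
  qed
qed

lemma dc_strict:
  assumes ne: "{} \<notin> E" and red: "reduce E = E" and X: "X \<in> E"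
  shows "down_closure (E - {X}) \<subset> down_closure E"
proof -
  have "down_closure (E - {X}) \<subseteq> down_closure E" unfolding down_closure_def by blast
  moreover have "X \<in> down_closure E" using X ne unfolding down_closure_def by blast
  moreover have "X \<notin> down_closure (E - {X})"
  proof
    assume "X \<in> down_closure (E - {X})"
    then obtain Z where "Z \<in> E" "Z \<noteq> X" "X \<subseteq> Z" unfolding down_closure_def by blast
    then show False using nsub_red[OF red X \<open>Z \<in> E\<close>] by simp
  qed
  ultimately show ?thesis by blast
qed

lemma red_remove: "reduce E = E \<Longrightarrow> reduce (E - {X}) = E - {X}"
  unfolding reduce_def by blast



lemma earI: "A \<in> F \<Longrightarrow> C \<in> F \<Longrightarrow> C \<noteq> A \<Longrightarrow> \<forall>B\<in>F. B \<noteq> A \<longrightarrow> A \<inter> B \<subseteq> C \<Longrightarrow> ear F A"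
  unfolding ear_def by blast

lemma earE: "ear F A \<Longrightarrow> F \<noteq> {A} \<Longrightarrow> \<exists>C\<in>F. C \<noteq> A \<and> (\<forall>B\<in>F. B \<noteq> A \<longrightarrow> A \<inter> B \<subseteq> C)"
  unfolding ear_def by blast

lemma earIn: "ear F A \<Longrightarrow> A \<in> F"
  unfolding ear_def by blast

lemma GG_remove:
  assumes fE: "finite E" and ne: "{} \<notin> E" and GG: "GG E" and ea: "ear E X"
  shows "GG (E - {X})"
  unfolding GG_def
proof
  fix W
  have X: "X \<in> E" using ea unfolding ear_def by simp
  define P where "P = X - \<Union>(E - {X})"
  have eq1: "induce W (E - {X}) = induce (W - P) (E - {X})"
  proof -
    have "\<forall>Z\<in>E - {X}. Z \<inter> W = Z \<inter> (W - P)" unfolding P_def by blast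
    then show ?thesis unfolding induce_def by (smt (verit, best) Collect_cong)
  qed
  have eq2: "reduce (induce (W - P) (E - {X})) = reduce (induce (W - P) E)"
  proof (rule reduce_eq)
    show "induce (W - P) (E - {X}) \<subseteq> induce (W - P) E" unfolding induce_def by blast
    show "\<forall>q\<in>induce (W - P) E. \<exists>p\<in>induce (W - P) (E - {X}). q \<subseteq> p"
    proof
      fix q assume "q \<in> induce (W - P) E"
      then obtain Z where Z: "Z \<in> E" "q = Z \<inter> (W - P)" "q \<noteq> {}" unfolding induce_def by blast
      show "\<exists>p\<in>induce (W - P) (E - {X}). q \<subseteq> p"
      proof (cases "Z = X")
        case False
        then have "q \<in> induce (W - P) (E - {X})" using Z unfolding induce_def by blast
        then show ?thesis by blast
      next
        case True
        show ?thesis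
        proof (cases "E = {X}")
          case True
          then have "P = X" unfolding P_def by blast
          then show ?thesis using Z \<open>Z = X\<close> by blast
        next
          case False
          then obtain C where C: "C \<in> E" "C \<noteq> X" "\<forall>B\<in>E. B \<noteq> X \<longrightarrow> X \<inter> B \<subseteq> C"
            using ea unfolding ear_def by blast
          have "X - P \<subseteq> C" unfolding P_def using C(3) by blast
          then have qC: "q \<subseteq> C \<inter> (W - P)" using Z \<open>Z = X\<close> by blast
          then have "C \<inter> (W - P) \<noteq> {}" using Z(3) by blast
          then have "C \<inter> (W - P) \<in> induce (W - P) (E - {X})" using C unfolding induce_def by blast
          then show ?thesis using qC by blast
        qed
      qed
    qed
  qed
  have "twoear (reduce (induce (W - P) E))" using GG unfolding GG_def by blast
  then show "twoear (reduce (induce W (E - {X})))" using eq1 eq2 by simp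
qed

lemma add_ear_simple:
  assumes fF: "finite F" and T: "twoear F" and AF: "A \<notin> F" and C0: "C0 \<in> F"
    and K: "\<forall>B\<in>F. A \<inter> B \<subseteq> C0"
  shows "twoear (insert A F)"
  unfolding twoear_def
proof (intro impI ballI)
  fix Z0 assume c2: "2 \<le> card (insert A F)" and Z0: "Z0 \<in> insert A F"
  show "\<exists>E. ear (insert A F) E \<and> E \<noteq> Z0"
  proof (cases "Z0 = A")
    case False
    have "\<forall>B\<in>insert A F. B \<noteq> A \<longrightarrow> A \<inter> B \<subseteq> C0" using K by blast
    moreover have "A \<in> insert A F" "C0 \<in> insert A F" "C0 \<noteq> A" using C0 AF by auto
    ultimately have "ear (insert A F) A" by (intro earI)
    then show ?thesis using False by blast
  next
    case True
    show ?thesis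
    proof (cases "2 \<le> card F")
      case True
      then obtain E where E: "ear F E" "E \<noteq> C0" using T C0 unfolding twoear_def by blast
      have EF: "E \<in> F" using earIn[OF E(1)] .
      have "F \<noteq> {E}" using True by auto
      then obtain D where D: "D \<in> F" "D \<noteq> E" "\<forall>B\<in>F. B \<noteq> E \<longrightarrow> E \<inter> B \<subseteq> D" using earE[OF E(1)] by blast
      have "E \<inter> A \<subseteq> D" using K EF D(3) C0 E(2) by blast
      then have "\<forall>B\<in>insert A F. B \<noteq> E \<longrightarrow> E \<inter> B \<subseteq> D" using D(3) by blast
      moreover have "E \<in> insert A F" "D \<in> insert A F" "D \<noteq> E" using EF D(1,2) by auto
      ultimately have "ear (insert A F) E" by (intro earI)
      moreover have "E \<noteq> Z0" using EF AF \<open>Z0 = A\<close> by blast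
      ultimately show ?thesis by blast
    next
      case False
      have "card F \<noteq> 0" using C0 fF by auto
      then have "card F = 1" using False by simp
      then obtain c where "F = {c}" using card_1_singleton_iff by (metis One_nat_def)
      then have Fc: "F = {C0}" using C0 by simp
      have "\<forall>B\<in>insert A F. B \<noteq> C0 \<longrightarrow> C0 \<inter> B \<subseteq> A" using Fc by blast
      moreover have "C0 \<in> insert A F" "A \<in> insert A F" "A \<noteq> C0" using C0 AF by auto
      ultimately have "ear (insert A F) C0" by (intro earI)
      moreover have "C0 \<noteq> Z0" using C0 AF \<open>Z0 = A\<close> by blast
      ultimately show ?thesis by blast
    qed
  qed
qed

lemma add_ear_replace:
  assumes fF: "finite F" and T: "twoear F" and AF: "A \<notin> F" and C0: "C0 \<in> F" and CA: "C0 \<subseteq> A"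
    and K: "\<forall>B\<in>F. A \<inter> B \<subseteq> C0"
  shows "twoear (insert A (F - {C0}))"
  unfolding twoear_def
proof (intro impI ballI)
  define F' where "F' = insert A (F - {C0})"
  fix Z0 assume c2: "2 \<le> card (insert A (F - {C0}))" and Z0: "Z0 \<in> insert A (F - {C0})"
  have "card (insert A (F - {C0})) = card (F - {C0}) + 1" using fF AF by simp
  also have "\<dots> = card F"
  proof -
    have "card (F - {C0}) = card F - 1" using C0 by (rule card_Diff_singleton)
    moreover have "card F > 0" using fF C0 card_gt_0_iff by blast
    ultimately show ?thesis by simp
  qed

  finally have cF: "2 \<le> card F" using c2 by simp
  define Z where "Z = (if Z0 = A then C0 else Z0)"
  have ZF: "Z \<in> F" using Z0 C0 unfolding Z_def by auto
  obtain E where E: "ear F E" "E \<noteq> Z" using T cF ZF unfolding twoear_def by blast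
  have EF: "E \<in> F" using earIn[OF E(1)] .
  have "F \<noteq> {E}" using cF by auto
  then obtain D where D: "D \<in> F" "D \<noteq> E" "\<forall>B\<in>F. B \<noteq> E \<longrightarrow> E \<inter> B \<subseteq> D" using earE[OF E(1)] by blast
  show "\<exists>E'. ear (insert A (F - {C0})) E' \<and> E' \<noteq> Z0"
  proof (cases "E = C0")
    case True
    have DA: "D \<noteq> A" using D(1) AF by blast
    have "\<forall>B\<in>insert A (F - {C0}). B \<noteq> A \<longrightarrow> A \<inter> B \<subseteq> D"
    proof (intro ballI impI)
      fix B assume "B \<in> insert A (F - {C0})" "B \<noteq> A"
      then have B: "B \<in> F" "B \<noteq> C0" by auto
      have "A \<inter> B \<subseteq> C0 \<inter> B" using K B(1) by blast
      also have "\<dots> \<subseteq> D" using D(3) B True by blast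
      finally show "A \<inter> B \<subseteq> D" .
    qed
    moreover have "A \<in> insert A (F - {C0})" "D \<in> insert A (F - {C0})" "D \<noteq> A" using D(1,2) DA True by auto
    ultimately have "ear (insert A (F - {C0})) A" by (intro earI)
    moreover have "A \<noteq> Z0" using E(2) True unfolding Z_def by auto
    ultimately show ?thesis by blast
  next
    case False
    define D' where "D' = (if D = C0 then A else D)"
    have D'F: "D' \<in> insert A (F - {C0})" unfolding D'_def using D(1) by auto
    have D'E: "D' \<noteq> E" unfolding D'_def using D(2) EF AF by auto
    have DD': "D \<subseteq> D'" unfolding D'_def using CA by auto
    have "\<forall>B\<in>insert A (F - {C0}). B \<noteq> E \<longrightarrow> E \<inter> B \<subseteq> D'"
    proof (intro ballI impI)
      fix B assume B: "B \<in> insert A (F - {C0})" "B \<noteq> E"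
      show "E \<inter> B \<subseteq> D'"
      proof (cases "B = A")
        case True
        have "E \<inter> A \<subseteq> E \<inter> C0" using K EF by blast
        also have "\<dots> \<subseteq> D" using D(3) C0 False by blast
        finally show ?thesis using True DD' by blast
      next
        case False
        then have "B \<in> F" using B(1) by blast
        then show ?thesis using D(3) B(2) DD' by blast
      qed
    qed
    moreover have "E \<in> insert A (F - {C0})" using EF False by blast
    ultimately have "ear (insert A (F - {C0})) E" using D'F D'E by (intro earI)
    moreover have "E \<noteq> Z0"
    proof
      assume EZ: "E = Z0"
      then have "Z0 \<noteq> A" using EF AF by blast
      then have "Z = Z0" unfolding Z_def by simp
      then show False using E(2) EZ by simp
    qed

    ultimately show ?thesis by blast
  qed
qed

lemma add_ear:
  assumes fF: "finite F" and ne: "{} \<notin> F" and red: "reduce F = F" and T: "twoear F"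
    and Ane: "A \<noteq> {}" and K: "\<forall>B\<in>F. A \<inter> B \<subseteq> K" and KC: "K = {} \<or> (\<exists>C0\<in>F. K \<subseteq> C0)"
  shows "twoear (reduce (insert A F))"
proof (cases "\<exists>B\<in>F. A \<subseteq> B")
  case True
  have "reduce F = reduce (insert A F)"
    by (rule reduce_eq) (use True in auto)
  then show ?thesis using red T by simp
next
  case False
  have AF: "A \<notin> F" using False by blast
  have RF: "reduce (insert A F) = insert A {B\<in>F. \<not> B \<subset> A}"
  proof (rule equalityI)
    show "reduce (insert A F) \<subseteq> insert A {B\<in>F. \<not> B \<subset> A}" unfolding reduce_def by blast
    show "insert A {B\<in>F. \<not> B \<subset> A} \<subseteq> reduce (insert A F)"
    proof
      fix x assume x: "x \<in> insert A {B\<in>F. \<not> B \<subset> A}"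
      show "x \<in> reduce (insert A F)"
      proof (cases "x = A")
        case True then show ?thesis using False unfolding reduce_def by blast
      next
        case xA: False
        then have xF: "x \<in> F" "\<not> x \<subset> A" using x by auto
        have "\<not> (\<exists>Y\<in>F. x \<subset> Y)"
        proof
          assume "\<exists>Y\<in>F. x \<subset> Y"
          then obtain Y where "Y \<in> F" "x \<subset> Y" by blast
          then show False using nsub_red[OF red xF(1) \<open>Y \<in> F\<close>] by blast
        qed
        then show ?thesis using xF unfolding reduce_def by blast
      qed
    qed
  qed
  have sub: "B \<subseteq> K" if "B \<in> F" "B \<subset> A" for B using K that by blast
  show ?thesis
  proof (cases "K = {}")
    case True
    have nB: "\<not> B \<subset> A" if "B \<in> F" for B
    proof
      assume "B \<subset> A"
      then have "B = {}" using sub[OF that] True by simp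
      then show False using ne that by simp
    qed
    have "{B\<in>F. \<not> B \<subset> A} = F" using nB by blast

    then have R: "reduce (insert A F) = insert A F" using RF by simp
    show ?thesis
    proof (cases "F = {}")
      case True
      then show ?thesis unfolding R twoear_def by simp
    next
      case False
      then obtain C0 where C0: "C0 \<in> F" by blast
      have "\<forall>B\<in>F. A \<inter> B \<subseteq> C0" using K \<open>K = {}\<close> by blast
      then show ?thesis unfolding R using add_ear_simple[OF fF T AF C0] by blast
    qed
  next
    case Kne: False
    then obtain C0 where C0: "C0 \<in> F" "K \<subseteq> C0" using KC by blast
    show ?thesis
    proof (cases "C0 \<subseteq> A")
      case False
      have "{B\<in>F. \<not> B \<subset> A} = F"
      proof -
        have "\<not> B \<subset> A" if "B \<in> F" for B
        proof
          assume "B \<subset> A"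
          then have "B \<subseteq> C0" using sub[OF that] C0(2) by blast
          then have "B = C0" using nsub_red[OF red that C0(1)] by simp
          then show False using \<open>B \<subset> A\<close> False by blast
        qed
        then show ?thesis by blast
      qed
      then have R: "reduce (insert A F) = insert A F" using RF by simp
      have "\<forall>B\<in>F. A \<inter> B \<subseteq> C0" using K C0(2) by blast
      then show ?thesis unfolding R using add_ear_simple[OF fF T AF C0(1)] by blast
    next
      case True
      have KC0: "K = C0" using True C0 K by blast
      have "{B\<in>F. \<not> B \<subset> A} = F - {C0}"
      proof -
        have "B \<subset> A \<longleftrightarrow> B = C0" if "B \<in> F" for B
        proof
          assume "B \<subset> A"
          then have "B \<subseteq> C0" using sub[OF that] KC0 by blast
          then show "B = C0" using nsub_red[OF red that C0(1)] by simp
        next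
          assume "B = C0"
          then show "B \<subset> A" using True AF C0(1) by blast
        qed
        then show ?thesis by blast
      qed
      then have R: "reduce (insert A F) = insert A (F - {C0})" using RF by simp
      have "\<forall>B\<in>F. A \<inter> B \<subseteq> C0" using K KC0 by blast
      then show ?thesis unfolding R using add_ear_replace[OF fF T AF C0(1) True] by blast
    qed
  qed
qed



lemma GG_add:
  assumes fE: "finite E" and ne: "{} \<notin> E" and red: "reduce E = E"
    and GG: "GG (E - {X})" and ea: "ear E X"
  shows "GG E"
  unfolding GG_def
proof
  fix W
  have X: "X \<in> E" using earIn[OF ea] .
  define F where "F = reduce (induce W (E - {X}))"
  have fE': "finite (E - {X})" using fE by simp
  have fF: "finite F" unfolding F_def using finite_induce[OF fE'] reduce_subset finite_subset by blast
  have FI: "F \<subseteq> induce W (E - {X})" unfolding F_def by (rule reduce_subset)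
  have neF: "{} \<notin> F" using FI unfolding induce_def by blast
  have redF: "reduce F = F" unfolding F_def using finite_induce[OF fE'] by (rule reduce_idem)
  have TF: "twoear F" using GG unfolding GG_def F_def by blast
  show "twoear (reduce (induce W E))"
  proof (cases "X \<inter> W = {}")
    case True
    have "induce W E = induce W (E - {X})" unfolding induce_def using True by blast
    then show ?thesis using TF F_def by simp
  next
    case False
    define A where "A = X \<inter> W"
    have eq: "reduce (insert A F) = reduce (induce W E)"
    proof (rule reduce_eq)
      show "insert A F \<subseteq> induce W E" using FI False X unfolding A_def induce_def by blast
      show "\<forall>q\<in>induce W E. \<exists>p\<in>insert A F. q \<subseteq> p"
      proof
        fix q assume "q \<in> induce W E"
        then obtain Z where Z: "Z \<in> E" "q = Z \<inter> W" "q \<noteq> {}" unfolding induce_def by blast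
        show "\<exists>p\<in>insert A F. q \<subseteq> p"
        proof (cases "Z = X")
          case True then show ?thesis using Z unfolding A_def by blast
        next
          case False
          then have "q \<in> induce W (E - {X})" using Z unfolding induce_def by blast
          then obtain M where "M \<in> F" "q \<subseteq> M" using reduce_above[OF finite_induce[OF fE']] unfolding F_def by blast
          then show ?thesis by blast
        qed
      qed
    qed
    have "\<exists>K. (\<forall>B\<in>F. A \<inter> B \<subseteq> K) \<and> (K = {} \<or> (\<exists>C0\<in>F. K \<subseteq> C0))"
    proof (cases "E = {X}")
      case True
      then have "E - {X} = {}" by simp
      then have "F = reduce (induce W {})" unfolding F_def by (rule arg_cong)

      also have "induce W {} = {}" unfolding induce_def by simp
      finally have "F = {}" unfolding reduce_def by simp
      then show ?thesis by blast

    next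
      case False
      then obtain C where C: "C \<in> E" "C \<noteq> X" "\<forall>B\<in>E. B \<noteq> X \<longrightarrow> X \<inter> B \<subseteq> C" using earE[OF ea] by blast
      have K1: "\<forall>B\<in>F. A \<inter> B \<subseteq> C \<inter> W"
      proof
        fix B assume "B \<in> F"
        then have "B \<in> induce W (E - {X})" using FI by blast
        then obtain Z where "Z \<in> E" "Z \<noteq> X" "B = Z \<inter> W" unfolding induce_def by blast
        then show "A \<inter> B \<subseteq> C \<inter> W" using C(3) unfolding A_def by blast
      qed
      have K2: "C \<inter> W = {} \<or> (\<exists>C0\<in>F. C \<inter> W \<subseteq> C0)"
      proof (cases "C \<inter> W = {}")
        case True then show ?thesis by simp
      next
        case False
        then have "C \<inter> W \<in> induce W (E - {X})" using C unfolding induce_def by blast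
        then obtain M where "M \<in> F" "C \<inter> W \<subseteq> M" using reduce_above[OF finite_induce[OF fE']] unfolding F_def by blast
        then show ?thesis by blast
      qed
      show ?thesis using K1 K2 by blast
    qed
    then obtain K where K: "\<forall>B\<in>F. A \<inter> B \<subseteq> K" and KC: "K = {} \<or> (\<exists>C0\<in>F. K \<subseteq> C0)" by blast
    have "A \<noteq> {}" using False A_def by simp
    then have "twoear (reduce (insert A F))" using add_ear[OF fF neF redF TF _ K KC] by blast
    then show ?thesis using eq by simp
  qed
qed

lemma reduce_univ: "{} \<notin> E \<Longrightarrow> reduce E = E \<Longrightarrow> reduce (induce UNIV E) = E"
proof -
  assume ne: "{} \<notin> E" and red: "reduce E = E"
  have "induce UNIV E = E" using ne by (intro induce_self) auto
  then show ?thesis using red by simp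
qed

lemma GG_regular:
  "finite E \<Longrightarrow> {} \<notin> E \<Longrightarrow> reduce E = E \<Longrightarrow> GG E \<Longrightarrow> regular (down_closure E)"
proof (induction "card E" arbitrary: E rule: less_induct)
  case less
  note fE = less.prems(1) and ne = less.prems(2) and red = less.prems(3) and GG = less.prems(4)
  show ?case
  proof (cases "E = {}")
    case True
    have dc: "down_closure E = {}" unfolding down_closure_def True by simp
    have "normal_series (down_closure E) (\<lambda>_. {}) 0"
      unfolding normal_series_def dc extreme_def maximal_edge_def by simp
    then show ?thesis unfolding regular_def by blast
  next
    case False
    have "\<exists>X. ear E X"
    proof (cases "2 \<le> card E")
      case True
      obtain Z where "Z \<in> E" using False by blast
      moreover have "twoear E" using GG reduce_univ[OF ne red] unfolding GG_def by metis
      ultimately show ?thesis using True unfolding twoear_def by blast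
    next
      case c: False
      have "card E \<noteq> 0" using False fE by simp
      then have "card E = 1" using c by simp
      then obtain X where "E = {X}" using card_1_singleton_iff by (metis One_nat_def)
      then have "ear E X" unfolding ear_def by simp
      then show ?thesis by blast
    qed
    then obtain X where ea: "ear E X" by blast
    have X: "X \<in> E" using earIn[OF ea] .
    have "card (E - {X}) < card E" using fE X by (meson card_Diff1_less)
    moreover have "finite (E - {X})" "{} \<notin> E - {X}" "reduce (E - {X}) = E - {X}" "GG (E - {X})"
      using fE ne red_remove[OF red] GG_remove[OF fE ne GG ea] by auto
    ultimately have "regular (down_closure (E - {X}))" using less.hyps by blast
    then obtain Ks r where Ks: "normal_series (down_closure (E - {X})) Ks r" "Ks r = {}"
      unfolding regular_def by blast
    define Ks' where "Ks' = (\<lambda>l. case l of 0 \<Rightarrow> down_closure E | Suc m \<Rightarrow> Ks m)"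
    have ext: "extreme (down_closure E) X" using ea ear_extreme[OF fE ne red] by simp
    have nsub: "normal_subcomplex (down_closure E) X = down_closure (E - {X})"
      using normal_dc[OF ne red ea] .
    have strict: "down_closure (E - {X}) \<subset> down_closure E" using dc_strict[OF ne red X] .
    have K0: "Ks 0 = down_closure (E - {X})" using Ks(1) unfolding normal_series_def by simp
    have "normal_series (down_closure E) Ks' (Suc r)"
      unfolding normal_series_def
    proof (intro conjI allI impI)
      show "Ks' 0 = down_closure E" unfolding Ks'_def by simp
      fix l assume l: "l < Suc r"
      show "Ks' (Suc l) \<subset> Ks' l"
      proof (cases l)
        case 0 then show ?thesis unfolding Ks'_def using K0 strict by simp
      next
        case (Suc m)
        then have "m < r" using l by simp
        then show ?thesis unfolding Ks'_def using Ks(1) Suc unfolding normal_series_def by simp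
      qed
      show "\<exists>X. extreme (Ks' l) X \<and> Ks' (Suc l) = normal_subcomplex (Ks' l) X"
      proof (cases l)
        case 0 then show ?thesis unfolding Ks'_def using K0 ext nsub by auto
      next
        case (Suc m)
        then have "m < r" using l by simp
        then show ?thesis unfolding Ks'_def using Ks(1) Suc unfolding normal_series_def by simp
      qed
    next
      show "\<not> (\<exists>X. extreme (Ks' (Suc r)) X)" unfolding Ks'_def using Ks(1) unfolding normal_series_def by simp
    qed
    moreover have "Ks' (Suc r) = {}" unfolding Ks'_def using Ks(2) by simp
    ultimately show ?thesis unfolding regular_def by blast
  qed
qed

lemma regular_GG:
  "normal_series (down_closure E) Ks r \<Longrightarrow> Ks r = {} \<Longrightarrow> finite E \<Longrightarrow> {} \<notin> E \<Longrightarrow> reduce E = E \<Longrightarrow> GG E"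
proof (induction r arbitrary: E Ks)
  case 0
  then have "down_closure E = {}" unfolding normal_series_def by simp
  then have "E = {}" using 0(4) unfolding down_closure_def by blast
  then show ?case unfolding GG_def twoear_def induce_def reduce_def by simp
next
  case (Suc r)
  note ns = Suc.prems(1) and fE = Suc.prems(3) and ne = Suc.prems(4) and red = Suc.prems(5)
  have K0: "Ks 0 = down_closure E" using ns unfolding normal_series_def by simp
  obtain X where X: "extreme (Ks 0) X" "Ks (Suc 0) = normal_subcomplex (Ks 0) X"
    using ns unfolding normal_series_def by blast
  have ea: "ear E X" using X(1) K0 ear_extreme[OF fE ne red] by simp
  have K1: "Ks (Suc 0) = down_closure (E - {X})" using X(2) K0 normal_dc[OF ne red ea] by simp
  have "normal_series (down_closure (E - {X})) (\<lambda>l. Ks (Suc l)) r"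
    unfolding normal_series_def
  proof (intro conjI allI impI)
    show "Ks (Suc 0) = down_closure (E - {X})" using K1 .
    fix l assume "l < r"
    then have "Suc l < Suc r" by simp
    then show "Ks (Suc (Suc l)) \<subset> Ks (Suc l)"
      "\<exists>Xa. extreme (Ks (Suc l)) Xa \<and> Ks (Suc (Suc l)) = normal_subcomplex (Ks (Suc l)) Xa"
      using ns unfolding normal_series_def by blast+
  next
    show "\<not> (\<exists>Xa. extreme (Ks (Suc r)) Xa)" using ns unfolding normal_series_def by blast
  qed
  moreover have "finite (E - {X})" "{} \<notin> E - {X}" "reduce (E - {X}) = E - {X}"
    using fE ne red_remove[OF red] by auto
  ultimately have "GG (E - {X})" using Suc.IH Suc.prems(2) by blast
  then show ?case using GG_add[OF fE ne red _ ea] by blast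
qed

lemma dc_reduce:
  assumes "finite E" shows "down_closure (reduce E) = down_closure E"
proof (rule equalityI)
  show "down_closure (reduce E) \<subseteq> down_closure E"
    unfolding down_closure_def using reduce_subset by blast
  show "down_closure E \<subseteq> down_closure (reduce E)"
  proof
    fix Y assume "Y \<in> down_closure E"
    then obtain X where X: "X \<in> E" "Y \<subseteq> X" "Y \<noteq> {}" unfolding down_closure_def by blast
    obtain M where "M \<in> reduce E" "X \<subseteq> M" using reduce_above[OF assms X(1)] by blast
    then show "Y \<in> down_closure (reduce E)" using X unfolding down_closure_def by blast
  qed
qed

theorem corollary2:
  fixes V :: "'a set" and E :: "'a set set"
  assumes "hypergraph V E"
  shows "hg_acyclic V E \<longleftrightarrow> vorobev_regular V E"
proof -
  have fV: "finite V" and EV: "E \<subseteq> Pow V" and ne: "{} \<notin> E"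
    using assms unfolding hypergraph_def by auto
  have "finite (Pow V)" using fV by simp
  then have fE: "finite E" using EV by (rule finite_subset[rotated])
  define E' where "E' = reduce E"
  have fE': "finite E'" unfolding E'_def using fE reduce_subset finite_subset by blast
  have ne': "{} \<notin> E'" unfolding E'_def using ne reduce_subset by blast
  have red': "reduce E' = E'" unfolding E'_def using fE by (rule reduce_idem)
  have EV': "\<forall>X\<in>E'. X \<subseteq> V" unfolding E'_def using EV reduce_subset by blast
  have "hg_acyclic V E \<longleftrightarrow> GG E'"
    unfolding hg_acyclic_def E'_def[symmetric]
    using acyc_GG[OF fV EV' fE' red'] GG_acyc[OF fV EV' fE'] by blast
  also have "\<dots> \<longleftrightarrow> regular (down_closure E')"
  proof
    assume "GG E'" then show "regular (down_closure E')" using GG_regular[OF fE' ne' red'] by blast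
  next
    assume "regular (down_closure E')"
    then obtain Ks r where "normal_series (down_closure E') Ks r" "Ks r = {}" unfolding regular_def by blast
    then show "GG E'" using regular_GG[OF _ _ fE' ne' red'] by blast

  qed
  also have "\<dots> \<longleftrightarrow> vorobev_regular V E"
    unfolding vorobev_regular_def E'_def using dc_reduce[OF fE] by simp
  finally show ?thesis .
qed

end
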